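(* Let $I=\langle N,M,V\rangle$ be an ordered instance of chores and let $i\in N$ be an agent with an MMS partition $A=\langle A_1,\dots,A_n\rangle$ containing a bundle $B$ with $|B|=2$ and $B\cap\{1,2,\dots,n-1\}=\emptyset$. Then $i$ has an MMS partition $A'=\langle A'_1,\dots,A'_n\rangle$ such that (i) $|A_j|=|A'_j|$ for all $j\in N$, (ii) $\{n,n+1\}$ is one of the bundles of $A'$, and (iii) each chore $g\in\{1,2,\dots,n-1\}$ lies in the bundle with the same index in $A$ and in $A'$.
   Context: An instance of chores $I=\langle N,M,V\rangle$ has agents $N=\{1,\dots,n\}$, chores $M=\{1,\dots,m\}$ and additive valuations $v_i$ with $v_i(\emptyset)=0$, $v_i(S)=\sum_{g\in S}v_i(\{g\})$ and $v_{ij}:=v_i(\{j\})\le 0$. It is ordered if $v_{ij}\le v_{i(j+1)}$ for all $i\in N$ and $1\le j<m$ (so chore $1$ is the worst). An allocation ($n$-partition) is an ordered $n$-tuple of pairwise disjoint, possibly empty subsets of $M$ with union $M$. The maximin share of $i$ is $\mu_i=\max_A\min_j v_i(A_j)$ over all allocations; an MMS partition of $i$ is an allocation $A$ with $v_i(A_j)\ge\mu_i$ for all $j$. *)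

theory Defs
  imports Complex_Main
begin

text \<open>Agents are 1..n, chores are 1..m; v i g is the (non-positive) value of chore g for agent i.
An allocation is A :: nat \<Rightarrow> nat set, where only the bundles A 1, ..., A n matter.\<close>

definition is_alloc :: "nat \<Rightarrow> nat \<Rightarrow> (nat \<Rightarrow> nat set) \<Rightarrow> bool" where
  "is_alloc n m A \<longleftrightarrow>
     (\<forall>j\<in>{1..n}. \<forall>k\<in>{1..n}. j \<noteq> k \<longrightarrow> A j \<inter> A k = {}) \<and>
     (\<Union>j\<in>{1..n}. A j) = {1..m}"

definition bval :: "(nat \<Rightarrow> nat \<Rightarrow> real) \<Rightarrow> nat \<Rightarrow> nat set \<Rightarrow> real" where
  "bval v i S = (\<Sum>g\<in>S. v i g)"

definition chores_instance :: "nat \<Rightarrow> nat \<Rightarrow> (nat \<Rightarrow> nat \<Rightarrow> real) \<Rightarrow> bool" where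
  "chores_instance n m v \<longleftrightarrow> (\<forall>i\<in>{1..n}. \<forall>g\<in>{1..m}. v i g \<le> 0)"

definition ordered_instance :: "nat \<Rightarrow> nat \<Rightarrow> (nat \<Rightarrow> nat \<Rightarrow> real) \<Rightarrow> bool" where
  "ordered_instance n m v \<longleftrightarrow> (\<forall>i\<in>{1..n}. \<forall>j. 1 \<le> j \<and> j < m \<longrightarrow> v i j \<le> v i (Suc j))"

definition mms :: "nat \<Rightarrow> nat \<Rightarrow> (nat \<Rightarrow> nat \<Rightarrow> real) \<Rightarrow> nat \<Rightarrow> real" where
  "mms n m v i = Max {Min ((\<lambda>j. bval v i (A j)) ` {1..n}) | A. is_alloc n m A}"

definition mms_partition :: "nat \<Rightarrow> nat \<Rightarrow> (nat \<Rightarrow> nat \<Rightarrow> real) \<Rightarrow> nat \<Rightarrow> (nat \<Rightarrow> nat set) \<Rightarrow> bool" where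
  "mms_partition n m v i A \<longleftrightarrow> is_alloc n m A \<and> (\<forall>j\<in>{1..n}. bval v i (A j) \<ge> mms n m v i)"

end

theory Submission
  imports Defs
begin

lemma ord_mono:
  assumes "ordered_instance n m v" "i \<in> {1..n}" "1 \<le> g" "g \<le> h" "h \<le> m"
  shows "v i g \<le> v i h"
  using assms(4,5)
proof (induction h rule: dec_induct)
  case base then show ?case by simp
next
  case (step k)
  then have "v i k \<le> v i (Suc k)" using assms(1,2,3) unfolding ordered_instance_def by auto
  with step show ?case by simp
qed

lemma pigeon:
  assumes ch: "chores_instance n m v" and ord: "ordered_instance n m v" and i: "i \<in> {1..n}"
    and al: "is_alloc n m A" and nm: "n + 1 \<le> m"
  shows "\<exists>j\<in>{1..n}. bval v i (A j) \<le> v i n + v i (n+1)"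
proof -
  have cov: "\<forall>g\<in>{1..n+1}. \<exists>j\<in>{1..n}. g \<in> A j"
  proof
    fix g assume "g \<in> {1..n+1}"
    then have "g \<in> {1..m}" using nm by auto
    then show "\<exists>j\<in>{1..n}. g \<in> A j" using al unfolding is_alloc_def by blast
  qed
  define f where "f g = (SOME j. j \<in> {1..n} \<and> g \<in> A j)" for g
  have f: "f g \<in> {1..n} \<and> g \<in> A (f g)" if "g \<in> {1..n+1}" for g
    unfolding f_def using cov that by (metis (mono_tags, lifting) someI_ex)
  have "\<not> inj_on f {1..n+1}"
  proof
    assume "inj_on f {1..n+1}"
    then have "card (f ` {1..n+1}) = n+1" by (simp add: card_image)
    moreover have "f ` {1..n+1} \<subseteq> {1..n}" using f by auto
    then have "card (f ` {1..n+1}) \<le> n" by (metis card_atLeastAtMost card_mono diff_Suc_1 finite_atLeastAtMost)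
    ultimately show False by simp
  qed
  then obtain g h where gh: "g \<in> {1..n+1}" "h \<in> {1..n+1}" "g < h" "f g = f h"
    unfolding inj_on_def by (metis linorder_neqE_nat)
  let ?j = "f g"
  have j: "?j \<in> {1..n}" "g \<in> A ?j" "h \<in> A ?j" using f gh by metis+
  have sub: "A ?j \<subseteq> {1..m}" using al j(1) unfolding is_alloc_def by blast
  then have fin: "finite (A ?j)" using finite_subset by blast
  have "bval v i (A ?j) = (\<Sum>x\<in>{g,h}. v i x) + (\<Sum>x\<in>A ?j - {g,h}. v i x)"
    unfolding bval_def using fin j by (metis empty_subsetI insert_subset sum.subset_diff add.commute)
  also have "(\<Sum>x\<in>A ?j - {g,h}. v i x) \<le> 0"
    using sub ch i unfolding chores_instance_def by (intro sum_nonpos) auto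
  also have "(\<Sum>x\<in>{g,h}. v i x) = v i g + v i h" using gh by simp
  also have "v i g \<le> v i n" using ord_mono[OF ord i] gh nm by auto
  also have "v i h \<le> v i (n+1)" using ord_mono[OF ord i] gh nm by auto
  finally show ?thesis using j by auto
qed

lemma main:
  assumes ch: "chores_instance n m v" and ord: "ordered_instance n m v" and i: "i \<in> {1..n}"
    and mp: "mms_partition n m v i A" and nm: "n + 1 \<le> m"
    and k: "k \<in> {1..n}" "A k = B"
    and inj: "inj_on p {1..m}" and into: "p ` {1..m} \<subseteq> {1..m}"
    and pB: "p ` B = {n, n+1}"
    and ge: "\<forall>g\<in>{1..m} - B. g \<le> p g"
    and fx: "\<forall>g<n. p g = g"
  shows "\<exists>A'. mms_partition n m v i A' \<and>
           (\<forall>j\<in>{1..n}. card (A j) = card (A' j)) \<and>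
           {n, n+1} \<in> A' ` {1..n} \<and>
           (\<forall>g\<in>{1..n-1}. \<forall>j\<in>{1..n}. g \<in> A j \<longleftrightarrow> g \<in> A' j)"
proof -
  have al: "is_alloc n m A" using mp unfolding mms_partition_def by simp
  have sub: "A j \<subseteq> {1..m}" if "j \<in> {1..n}" for j using al that unfolding is_alloc_def by blast
  have onto: "p ` {1..m} = {1..m}" using endo_inj_surj[OF _ into inj] by simp
  define A' where "A' j = p ` A j" for j
  have al': "is_alloc n m A'"
    unfolding is_alloc_def
  proof (intro conjI ballI impI)
    fix j k assume jk: "j \<in> {1..n}" "k \<in> {1..n}" "j \<noteq> k"
    have "A' j \<inter> A' k = p ` (A j \<inter> A k)" unfolding A'_def
      using inj_on_image_Int[OF inj sub[OF jk(1)] sub[OF jk(2)]] by simp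
    also have "A j \<inter> A k = {}" using al jk unfolding is_alloc_def by blast
    finally show "A' j \<inter> A' k = {}" by simp
  next
    have "(\<Union>j\<in>{1..n}. A' j) = p ` (\<Union>j\<in>{1..n}. A j)" unfolding A'_def by auto
    also have "\<dots> = {1..m}" using al onto unfolding is_alloc_def by simp
    finally show "(\<Union>j\<in>{1..n}. A' j) = {1..m}" .
  qed
  have val: "bval v i (A' j) \<ge> mms n m v i" if j: "j \<in> {1..n}" for j
  proof (cases "A j = B")
    case True
    then have "A' j = {n, n+1}" using pB unfolding A'_def by simp
    then have "bval v i (A' j) = v i n + v i (n+1)" unfolding bval_def by simp
    moreover obtain j' where "j' \<in> {1..n}" "bval v i (A j') \<le> v i n + v i (n+1)"
      using pigeon[OF ch ord i al nm] by blast
    moreover have "bval v i (A j') \<ge> mms n m v i" using mp \<open>j' \<in> {1..n}\<close>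
      unfolding mms_partition_def by blast
    ultimately show ?thesis by linarith
  next
    case False
    then have "j \<noteq> k" using k by auto
    then have disj: "A j \<inter> B = {}" using al j k unfolding is_alloc_def by blast
    have "bval v i (A' j) = (\<Sum>g\<in>A j. v i (p g))" unfolding A'_def bval_def
      using sum.reindex[of p "A j" "v i"] inj_on_subset[OF inj sub[OF j]] by simp
    also have "\<dots> \<ge> (\<Sum>g\<in>A j. v i g)"
    proof (rule sum_mono)
      fix g assume g: "g \<in> A j"
      then have gm: "g \<in> {1..m}" using sub[OF j] by auto
      then have "p g \<in> {1..m}" using into by (meson image_subset_iff)
      moreover have "g \<le> p g" using ge gm g disj by auto
      ultimately show "v i g \<le> v i (p g)" using ord_mono[OF ord i] gm by auto
    qed
    finally have "bval v i (A' j) \<ge> (\<Sum>g\<in>A j. v i g)" .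
    moreover have "(\<Sum>g\<in>A j. v i g) \<ge> mms n m v i" using mp j unfolding mms_partition_def bval_def by blast
    ultimately show ?thesis by linarith
  qed
  show ?thesis
  proof (intro exI[of _ A'] conjI ballI)
    show "mms_partition n m v i A'" unfolding mms_partition_def using al' val by simp
  next
    fix j assume j: "j \<in> {1..n}"
    show "card (A j) = card (A' j)" unfolding A'_def
      using card_image[OF inj_on_subset[OF inj sub[OF j]]] by simp
  next
    have "A' k = {n, n+1}" using k pB unfolding A'_def by simp
    then show "{n, n+1} \<in> A' ` {1..n}" using k(1) by (metis image_eqI)
  next
    fix g j assume g: "g \<in> {1..n-1}" and j: "j \<in> {1..n}"
    have pg: "p g = g" using fx g by auto
    have gm: "g \<in> {1..m}" using g nm by auto
    show "g \<in> A j \<longleftrightarrow> g \<in> A' j"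
    proof
      assume "g \<in> A j" then have "p g \<in> p ` A j" by (rule imageI)
      then show "g \<in> A' j" unfolding A'_def using pg by simp
    next
      assume "g \<in> A' j"
      then obtain x where x: "x \<in> A j" "p x = g" unfolding A'_def by auto
      have xm: "x \<in> {1..m}" using x(1) sub[OF j] by blast
      have "p x = p g" using x(2) pg by simp
      then have "x = g" using inj_onD[OF inj _ xm gm] by simp
      then show "g \<in> A j" using x by simp
    qed
  qed
qed

theorem lemma15:
  fixes n m i :: nat and v :: "nat \<Rightarrow> nat \<Rightarrow> real" and A :: "nat \<Rightarrow> nat set" and B :: "nat set"
  assumes "n \<ge> 1"
    and "chores_instance n m v"
    and "ordered_instance n m v"
    and "i \<in> {1..n}"
    and "mms_partition n m v i A"
    and "B \<in> A ` {1..n}"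
    and "card B = 2"
    and "B \<inter> {1..n-1} = {}"
  shows "\<exists>A'. mms_partition n m v i A' \<and>
           (\<forall>j\<in>{1..n}. card (A j) = card (A' j)) \<and>
           {n, n+1} \<in> A' ` {1..n} \<and>
           (\<forall>g\<in>{1..n-1}. \<forall>j\<in>{1..n}. g \<in> A j \<longleftrightarrow> g \<in> A' j)"
proof -
  note as = assms
  obtain k where k: "k \<in> {1..n}" "A k = B" using as(6) by auto
  have al: "is_alloc n m A" using as(5) unfolding mms_partition_def by simp
  have Bsub: "B \<subseteq> {1..m}" using al k unfolding is_alloc_def by blast
  have Bge: "\<forall>x\<in>B. n \<le> x \<and> x \<le> m" using Bsub as(8) by fastforce
  obtain a b where ab: "B = {a, b}" "a < b"
    using as(7) by (metis card_2_iff linorder_neqE_nat insert_commute)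
  have an: "n \<le> a" "b \<le> m" using Bge ab by auto
  have nm: "n + 1 \<le> m" using an ab by simp
  define sw :: "nat \<Rightarrow> nat \<Rightarrow> nat \<Rightarrow> nat" where "sw x y g = (if g = x then y else if g = y then x else g)" for x y g
  have swinj: "inj (sw x y)" for x y unfolding sw_def inj_def by auto
  have swinto: "sw x y ` {1..m} \<subseteq> {1..m}" if "x \<in> {1..m}" "y \<in> {1..m}" for x y
    using that unfolding sw_def by auto
  show ?thesis
  proof (cases "n + 1 \<in> B")
    case True
    then obtain c where c: "B = {c, n+1}" "c \<noteq> n + 1" using ab by auto
    have cn: "n \<le> c" "c \<le> m" using Bge c by auto
    show ?thesis
    proof (rule main[OF as(2,3,4,5) nm k, of "sw c n"])
      show "inj_on (sw c n) {1..m}" using swinj inj_on_subset by blast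
      show "sw c n ` {1..m} \<subseteq> {1..m}" using swinto cn as(1) by simp
      show "sw c n ` B = {n, n + 1}" using c unfolding sw_def by auto
      show "\<forall>g\<in>{1..m} - B. g \<le> sw c n g" using c cn unfolding sw_def by auto
      show "\<forall>g<n. sw c n g = g" using cn unfolding sw_def by auto
    qed
  next
    case False
    then have bn: "n + 1 < b" using ab an by auto
    have an1: "a \<noteq> n + 1" using False ab by auto
    let ?p = "sw a n \<circ> sw b (n+1)"
    show ?thesis
    proof (rule main[OF as(2,3,4,5) nm k, of ?p])
      show "inj_on ?p {1..m}" using inj_on_subset[OF inj_compose[OF swinj swinj] subset_UNIV] by simp
      have "sw b (n+1) ` {1..m} \<subseteq> {1..m}" using swinto an bn by simp
      moreover have "sw a n ` {1..m} \<subseteq> {1..m}" using swinto an ab as(1) by simp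
      ultimately show "?p ` {1..m} \<subseteq> {1..m}" by (simp add: image_comp[symmetric]) (blast)
      show "?p ` B = {n, n + 1}" using ab an1 bn unfolding sw_def by auto
      show "\<forall>g\<in>{1..m} - B. g \<le> ?p g" using ab an bn an1 unfolding sw_def by auto
      show "\<forall>g<n. ?p g = g" using an ab bn unfolding sw_def by auto
    qed
  qed
qed

end
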